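(* Let $\Gamma=\{0=\rho_1<\rho_2<\cdots\}$ be an Arf numerical semigroup and $d_i=\rho_{i+1}-\rho_i$ for $i\ge1$. If $i\ge2$ and $d_i<d_{i-1}$, then \[ \mathrm{Ap}(\Gamma,-d_i)=\{\rho_1,\dots,\rho_{i-1}\}. \]
   Context: A numerical semigroup is a subset of $\mathbb N$ containing $0$, closed under addition, with finite complement; its elements listed increasingly are $\rho_1<\rho_2<\cdots$. $\Gamma$ is Arf if $\rho_i+\rho_j-\rho_k\in\Gamma$ for all $i\ge j\ge k$. For $x\in\mathbb Z$, $\mathrm{Ap}(\Gamma,x)=\{s\in\Gamma: s-x\notin\Gamma\}$. *)

theory Defs
  imports Main "HOL-Library.Infinite_Set"
begin

definition numerical_semigroup :: "nat set \<Rightarrow> bool" where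
  "numerical_semigroup S \<longleftrightarrow> 0 \<in> S \<and> (\<forall>a\<in>S. \<forall>b\<in>S. a + b \<in> S) \<and> finite (UNIV - S)"

definition rho :: "nat set \<Rightarrow> nat \<Rightarrow> nat" where
  "rho S i = enumerate S (i - 1)"

definition arf :: "nat set \<Rightarrow> bool" where
  "arf S \<longleftrightarrow> numerical_semigroup S \<and>
     (\<forall>i j k. 1 \<le> k \<and> k \<le> j \<and> j \<le> i \<longrightarrow> rho S i + rho S j - rho S k \<in> S)"

definition apery :: "nat set \<Rightarrow> int \<Rightarrow> int set" where
  "apery S x = {s \<in> int ` S. s - x \<notin> int ` S}"

end

theory Submission
  imports Defs
begin

lemma inf_ns: "numerical_semigroup S \<Longrightarrow> infinite S"
  unfolding numerical_semigroup_def
  using infinite_UNIV_nat by (metis Diff_infinite_finite infinite_super)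

lemma arf_elem:
  assumes "arf S" "a \<in> S" "b \<in> S" "c \<in> S" "c \<le> b" "b \<le> a"
  shows "a + b - c \<in> S"
proof -
  have inf: "infinite S" using assms(1) inf_ns arf_def by blast
  obtain na where na: "enumerate S na = a" using enumerate_Ex[OF inf assms(2)] by blast
  obtain nb where nb: "enumerate S nb = b" using enumerate_Ex[OF inf assms(3)] by blast
  obtain nc where nc: "enumerate S nc = c" using enumerate_Ex[OF inf assms(4)] by blast
  have "nc \<le> nb" "nb \<le> na" using assms(5,6) na nb nc inf by auto
  hence "rho S (Suc na) + rho S (Suc nb) - rho S (Suc nc) \<in> S"
    using assms(1) unfolding arf_def by (metis Suc_le_mono le_add1 plus_1_eq_Suc)
  thus ?thesis using na nb nc by (simp add: rho_def)
qed

lemma arf_elem2: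
  assumes "arf S" "a \<in> S" "b \<in> S" "c \<in> S" "c \<le> b" "c \<le> a"
  shows "a + b - c \<in> S"
proof (cases "b \<le> a")
  case True then show ?thesis using arf_elem assms by blast
next
  case False then show ?thesis using arf_elem[OF assms(1,3,2,4)] assms by (simp add: add.commute)
qed

theorem lemma3p3:
  fixes \<Gamma> :: "nat set" and i :: nat
  assumes "arf \<Gamma>"
    and "i \<ge> 2"
    and "rho \<Gamma> (i + 1) - rho \<Gamma> i < rho \<Gamma> i - rho \<Gamma> (i - 1)"
  shows "apery \<Gamma> (- int (rho \<Gamma> (i + 1) - rho \<Gamma> i)) = int ` rho \<Gamma> ` {1..i - 1}"
proof -
  have inf: "infinite \<Gamma>" using assms(1) inf_ns arf_def by blast
  define e where "e = enumerate \<Gamma>"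
  have em: "e m < e n \<longleftrightarrow> m < n" for m n using inf e_def by simp
  have eml: "e m \<le> e n \<longleftrightarrow> m \<le> n" for m n using inf e_def by simp
  have ein: "e n \<in> \<Gamma>" for n using inf e_def enumerate_in_set by blast
  have eex: "s \<in> \<Gamma> \<Longrightarrow> \<exists>n. e n = s" for s using enumerate_Ex[OF inf] e_def by blast
  obtain p where p: "i = Suc (Suc p)" using assms(2) by (metis add_2_eq_Suc le_Suc_ex)
  have r1: "rho \<Gamma> (i+1) = e (Suc (Suc p))" "rho \<Gamma> i = e (Suc p)" "rho \<Gamma> (i - 1) = e p"
    by (simp_all add: rho_def e_def p)
  define d where "d = e (Suc (Suc p)) - e (Suc p)"
  have ord: "e p < e (Suc p)" "e (Suc p) < e (Suc (Suc p))" using em by auto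
  have dlt: "d < e (Suc p) - e p" using assms(3) r1 d_def by simp
  have gap: "s \<notin> \<Gamma>" if "e m < s" "s < e (Suc m)" for s m
  proof
    assume "s \<in> \<Gamma>"
    then obtain n where "e n = s" using eex by blast
    with that em show False by (metis Suc_lessI less_asym)
  qed
  have notin: "e p + d \<notin> \<Gamma>"
    using gap[of p "e p + d"] dlt ord d_def by simp
  have rhs: "int ` rho \<Gamma> ` {1..i - 1} = int ` e ` {0..p}"
  proof -
    have "rho \<Gamma> ` {1..i - 1} = e ` {0..p}"
    proof
      show "rho \<Gamma> ` {1..i - 1} \<subseteq> e ` {0..p}"
        unfolding rho_def e_def p by force
      show "e ` {0..p} \<subseteq> rho \<Gamma> ` {1..i - 1}"
      proof
        fix x assume "x \<in> e ` {0..p}"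
        then obtain k where "k \<le> p" "x = e k" by auto
        hence "x = rho \<Gamma> (Suc k)" "Suc k \<in> {1..i-1}" by (auto simp: rho_def e_def p)
        thus "x \<in> rho \<Gamma> ` {1..i - 1}" by blast
      qed
    qed
    thus ?thesis by simp
  qed
  have key: "s + d \<notin> \<Gamma> \<longleftrightarrow> (\<exists>k\<le>p. s = e k)" if sG: "s \<in> \<Gamma>" for s
  proof
    assume A: "s + d \<notin> \<Gamma>"
    obtain n where n: "e n = s" using eex sG by blast
    show "\<exists>k\<le>p. s = e k"
    proof (rule ccontr)
      assume "\<not> ?thesis"
      hence "Suc p \<le> n" using n by (metis not_less_eq_eq)
      show False
      proof (cases "n = Suc p")
        case True
        then show ?thesis using A n d_def ord ein by simp
      next
        case False
        hence "Suc (Suc p) \<le> n" using \<open>Suc p \<le> n\<close> by simp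
        hence "e (Suc (Suc p)) \<le> s" "e (Suc p) \<le> e (Suc (Suc p))" using eml n by auto
        hence "s + e (Suc (Suc p)) - e (Suc p) \<in> \<Gamma>"
          using arf_elem[OF assms(1) sG ein ein] by blast
        thus False using A d_def ord by simp
      qed
    qed
  next
    assume "\<exists>k\<le>p. s = e k"
    then obtain k where k: "k \<le> p" "s = e k" by blast
    show "s + d \<notin> \<Gamma>"
    proof
      assume B: "s + d \<in> \<Gamma>"
      have "e k \<le> e p" using k eml by simp
      have "e p + (s + d) - s \<in> \<Gamma>"
        using arf_elem2[OF assms(1) ein B sG] \<open>e k \<le> e p\<close> k by simp
      thus False using notin by simp
    qed
  qed
  show ?thesis
    unfolding rhs apery_def
  proof (intro set_eqI iffI)
    fix x assume "x \<in> {s \<in> int ` \<Gamma>. s - - int (rho \<Gamma> (i + 1) - rho \<Gamma> i) \<notin> int ` \<Gamma>}"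
    then obtain s where s: "s \<in> \<Gamma>" "x = int s" "int s + int d \<notin> int ` \<Gamma>"
      using r1 d_def by auto
    hence "s + d \<notin> \<Gamma>" by (metis image_eqI of_nat_add)
    then obtain k where "k \<le> p" "s = e k" using key s by blast
    thus "x \<in> int ` e ` {0..p}" using s by auto
  next
    fix x assume "x \<in> int ` e ` {0..p}"
    then obtain k where k: "k \<le> p" "x = int (e k)" by auto
    hence "e k + d \<notin> \<Gamma>" using key ein by blast
    hence "int (e k) + int d \<notin> int ` \<Gamma>"
      by (metis imageE of_nat_add of_nat_eq_iff)
    thus "x \<in> {s \<in> int ` \<Gamma>. s - - int (rho \<Gamma> (i + 1) - rho \<Gamma> i) \<notin> int ` \<Gamma>}"
      using k ein r1 d_def by auto
  qed
qed

end
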